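(* Let $F\in\mathbf F$ satisfy either (i) $\mathbf{NA^r}$, or (ii) both $\mathbf{NA^s}$ and $\mathbf{EF}$. Then $F$ satisfies $\mathbf{KP}$.
   Context: Fix $T\in\mathbb N$, $\mathbb T=\{0,\dots,T\}$, $d\ge1$, a complete probability space $(\Omega,\mathcal F,\mathbb P)$ and a filtration $\mathbb H=(\mathcal H_t)_{t\in\mathbb T}$ with $\mathcal H_T\subset\mathcal F$ (no other relation between $\mathbb H$ and the other processes is assumed). Equalities and inequalities between random variables are understood $\mathbb P$-a.s. $\mathbb M^d$ denotes the real $d\times d$ matrices. For $E\subset\mathbb M^d$ (or $E\subset\mathbb R^d$) and a $\sigma$-algebra $\mathcal G\subset\mathcal F$, $L^0(E;\mathcal G)$ is the set of $E$-valued $\mathcal G$-measurable random variables. A closed convex cone $\mathcal A\subset\mathbb M^d$ is fixed; $\mathbb L^0(\mathcal A;\mathbb H)$ denotes the set of $\mathcal A$-valued $\mathbb H$-adapted processes $(\eta_t)_{t\in\mathbb T}$. $\mathbb F$ is the set of continuous maps $f:\mathbb M^d\to\mathbb R^d$ such that (HF1) $f(\lambda a)=\lambda f(a)$ for all $\lambda\ge0$, $a\in\mathbb M^d$; (HF2) $f(\lambda a+\beta a')-(\lambda f(a)+\beta f(a'))\in\mathbb R^d_+$ for all $\lambda,\beta\ge0$, $a,a'\in\mathcal A$. $\mathbf F$ is the set of sequences $F=(F_t)_{t\in\mathbb T}$ of $\mathcal F$-measurable random maps $F_t:\Omega\times\mathbb M^d\to\mathbb R^d$ with $F_t(\omega,\cdot)\in\mathbb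 F$ for a.e. $\omega$ (no adaptedness to $\mathbb H$ is assumed); for a random matrix $\eta$, $F_t(\eta)(\omega)=F_t(\omega,\eta(\omega))$. $N_t(F)=\{F_t(\eta):\eta\in L^0(\mathcal A;\mathcal H_t)\}$, $N^0_t(F)=N_t(F)\cap(-N_t(F))$. For a process $\xi=(\xi_t)_{t\in\mathbb T}$, "$\xi\in N(F)$" means $\xi_t\in N_t(F)$ for all $t$, and "$\xi\in N^0(F)$" means $\xi_t\in N^0_t(F)$ for all $t$. $V_t(\xi)=\sum_{s=0}^t\xi_s$ and $A_t(F)=\{V_t(\xi)-r:\ \xi\in N(F),\ r\in L^0(\mathbb R^d_+;\mathcal F)\}$. Condition $\mathbf{KP}$: for all $\xi,\tilde\xi\in N(F)$, $V_T(\xi)+V_T(\tilde\xi)\in L^0(\mathbb R^d_+;\mathcal F)$ implies $\xi\in N^0(F)$ and $V_T(\xi)+V_T(\tilde\xi)=0$. Condition $\mathbf{NA^w}$ (for an element $G\in\mathbf F$): $A_T(G)\cap L^0(\mathbb R^d_+;\mathcal F)=\{0\}$. Condition $\mathbf{NA^s}$: $A_t(F)\cap\big(-N_t(F)+L^0(\mathbb R^d_+;\mathcal F)\big)\subset N^0_t(F)$ for all $t\in\mathbb T$. Condition $\mathbf{EF}$: $N^0_t(F)=\{0\}$ for all $t\in\mathbb T$. Condition $\mathbf{NA^r}$: there exists $G\in\mathbf F$ such that for all $\eta\in\mathbb L^0(\mathcal A;\mathbb H)$, $t\in\mathbb T$ and $i\le d$: (1) $G^i_t(\eta_t)\ge F^i_t(\eta_t)$;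 (2) if $F_t(\eta_t)\notin N^0_t(F)$ then the event $\{\exists k\le d: G^k_t(\eta_t)>F^k_t(\eta_t)\}$ has positive probability; (3) $\mathbf{NA^w}$ holds for $G$. *)

theory Defs
  imports "HOL-Probability.Probability"
begin

type_synonym 'd mat = "real ^ 'd ^ 'd"
type_synonym ('a, 'd) rmap = "nat \<Rightarrow> 'a \<Rightarrow> 'd mat \<Rightarrow> real ^ 'd"

definition setting :: "'a measure \<Rightarrow> (nat \<Rightarrow> 'a set set) \<Rightarrow> nat \<Rightarrow> ('d::finite) mat set \<Rightarrow> bool" where
  "setting M H T A \<longleftrightarrow>
     prob_space M \<and>
     (\<forall>N \<in> null_sets M. \<forall>B. B \<subseteq> N \<longrightarrow> B \<in> sets M) \<and>
     (\<forall>t\<le>T. sigma_algebra (space M) (H t)) \<and>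
     (\<forall>s t. s \<le> t \<and> t \<le> T \<longrightarrow> H s \<subseteq> H t) \<and>
     H T \<subseteq> sets M \<and>
     closed A \<and> convex A \<and> cone A \<and> A \<noteq> {}"

(* L^0(E;G): classes (modulo P-a.s. equality) of E-valued G-measurable random variables. *)
definition L0 :: "'a measure \<Rightarrow> 'a set set \<Rightarrow> ('b::topological_space) set \<Rightarrow> ('a \<Rightarrow> 'b) set" where
  "L0 M G E = {X. \<exists>Y. Y \<in> borel_measurable (sigma (space M) G) \<and> (\<forall>\<omega>\<in>space M. Y \<omega> \<in> E)
                      \<and> (AE \<omega> in M. X \<omega> = Y \<omega>)}"

definition Rplus :: "(real ^ 'd) set" where
  "Rplus = {x. \<forall>i. 0 \<le> x $ i}"

definition classF :: "('d::finite) mat set \<Rightarrow> ('d mat \<Rightarrow> real ^ 'd) \<Rightarrow> bool" where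
  "classF A f \<longleftrightarrow> continuous_on UNIV f \<and>
     (\<forall>l::real. \<forall>a. l \<ge> 0 \<longrightarrow> f (l *\<^sub>R a) = l *\<^sub>R f a) \<and>
     (\<forall>l::real. \<forall>b::real. \<forall>a\<in>A. \<forall>a'\<in>A. l \<ge> 0 \<longrightarrow> b \<ge> 0 \<longrightarrow>
        (\<forall>i. 0 \<le> (f (l *\<^sub>R a + b *\<^sub>R a') - (l *\<^sub>R f a + b *\<^sub>R f a')) $ i))"

definition boldF :: "'a measure \<Rightarrow> nat \<Rightarrow> ('d::finite) mat set \<Rightarrow> ('a, 'd) rmap \<Rightarrow> bool" where
  "boldF M T A F \<longleftrightarrow> (\<forall>t\<le>T. (\<lambda>(\<omega>, a). F t \<omega> a) \<in> borel_measurable (M \<Otimes>\<^sub>M borel)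
                              \<and> (AE \<omega> in M. classF A (F t \<omega>)))"

definition Nset :: "'a measure \<Rightarrow> (nat \<Rightarrow> 'a set set) \<Rightarrow> ('d::finite) mat set \<Rightarrow> ('a, 'd) rmap
                    \<Rightarrow> nat \<Rightarrow> ('a \<Rightarrow> real ^ 'd) set" where
  "Nset M H A F t = {\<xi>. \<exists>\<eta> \<in> L0 M (H t) A. AE \<omega> in M. \<xi> \<omega> = F t \<omega> (\<eta> \<omega>)}"

definition N0set :: "'a measure \<Rightarrow> (nat \<Rightarrow> 'a set set) \<Rightarrow> ('d::finite) mat set \<Rightarrow> ('a, 'd) rmap
                    \<Rightarrow> nat \<Rightarrow> ('a \<Rightarrow> real ^ 'd) set" where
  "N0set M H A F t = {\<xi>. \<xi> \<in> Nset M H A F t \<and> (\<lambda>\<omega>. - \<xi> \<omega>) \<in> Nset M H A F t}"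

definition inN :: "'a measure \<Rightarrow> (nat \<Rightarrow> 'a set set) \<Rightarrow> nat \<Rightarrow> ('d::finite) mat set \<Rightarrow> ('a, 'd) rmap
                    \<Rightarrow> (nat \<Rightarrow> 'a \<Rightarrow> real ^ 'd) \<Rightarrow> bool" where
  "inN M H T A F \<xi> \<longleftrightarrow> (\<forall>t\<le>T. \<xi> t \<in> Nset M H A F t)"

definition inN0 :: "'a measure \<Rightarrow> (nat \<Rightarrow> 'a set set) \<Rightarrow> nat \<Rightarrow> ('d::finite) mat set \<Rightarrow> ('a, 'd) rmap
                    \<Rightarrow> (nat \<Rightarrow> 'a \<Rightarrow> real ^ 'd) \<Rightarrow> bool" where
  "inN0 M H T A F \<xi> \<longleftrightarrow> (\<forall>t\<le>T. \<xi> t \<in> N0set M H A F t)"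

definition V :: "nat \<Rightarrow> (nat \<Rightarrow> 'a \<Rightarrow> real ^ 'd) \<Rightarrow> 'a \<Rightarrow> real ^ 'd" where
  "V t \<xi> \<omega> = (\<Sum>s\<le>t. \<xi> s \<omega>)"

definition Aset :: "'a measure \<Rightarrow> (nat \<Rightarrow> 'a set set) \<Rightarrow> nat \<Rightarrow> ('d::finite) mat set \<Rightarrow> ('a, 'd) rmap
                    \<Rightarrow> nat \<Rightarrow> ('a \<Rightarrow> real ^ 'd) set" where
  "Aset M H T A F t = {X. \<exists>\<xi> r. inN M H T A F \<xi> \<and> r \<in> L0 M (sets M) Rplus
                          \<and> (AE \<omega> in M. X \<omega> = V t \<xi> \<omega> - r \<omega>)}"

definition KP :: "'a measure \<Rightarrow> (nat \<Rightarrow> 'a set set) \<Rightarrow> nat \<Rightarrow> ('d::finite) mat set \<Rightarrow> ('a, 'd) rmap \<Rightarrow> bool" where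
  "KP M H T A F \<longleftrightarrow> (\<forall>\<xi> \<xi>'. inN M H T A F \<xi> \<and> inN M H T A F \<xi>'
        \<and> (\<lambda>\<omega>. V T \<xi> \<omega> + V T \<xi>' \<omega>) \<in> L0 M (sets M) Rplus
        \<longrightarrow> inN0 M H T A F \<xi> \<and> (AE \<omega> in M. V T \<xi> \<omega> + V T \<xi>' \<omega> = 0))"

definition NAw :: "'a measure \<Rightarrow> (nat \<Rightarrow> 'a set set) \<Rightarrow> nat \<Rightarrow> ('d::finite) mat set \<Rightarrow> ('a, 'd) rmap \<Rightarrow> bool" where
  "NAw M H T A G \<longleftrightarrow> (\<forall>X. X \<in> Aset M H T A G T \<and> X \<in> L0 M (sets M) Rplus \<longrightarrow> (AE \<omega> in M. X \<omega> = 0))"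

definition NAs :: "'a measure \<Rightarrow> (nat \<Rightarrow> 'a set set) \<Rightarrow> nat \<Rightarrow> ('d::finite) mat set \<Rightarrow> ('a, 'd) rmap \<Rightarrow> bool" where
  "NAs M H T A F \<longleftrightarrow> (\<forall>t\<le>T. \<forall>X. X \<in> Aset M H T A F t \<and>
        (\<exists>\<zeta> \<in> Nset M H A F t. \<exists>r \<in> L0 M (sets M) Rplus. AE \<omega> in M. X \<omega> = - \<zeta> \<omega> + r \<omega>)
        \<longrightarrow> X \<in> N0set M H A F t)"

definition EF :: "'a measure \<Rightarrow> (nat \<Rightarrow> 'a set set) \<Rightarrow> nat \<Rightarrow> ('d::finite) mat set \<Rightarrow> ('a, 'd) rmap \<Rightarrow> bool" where
  "EF M H T A F \<longleftrightarrow> (\<forall>t\<le>T. \<forall>\<xi> \<in> N0set M H A F t. AE \<omega> in M. \<xi> \<omega> = 0)"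

definition NAr :: "'a measure \<Rightarrow> (nat \<Rightarrow> 'a set set) \<Rightarrow> nat \<Rightarrow> ('d::finite) mat set \<Rightarrow> ('a, 'd) rmap \<Rightarrow> bool" where
  "NAr M H T A F \<longleftrightarrow> (\<exists>G. boldF M T A G \<and>
     (\<forall>\<eta>. (\<forall>t\<le>T. \<eta> t \<in> L0 M (H t) A) \<longrightarrow>
        (\<forall>t\<le>T.
           (\<forall>i. AE \<omega> in M. G t \<omega> (\<eta> t \<omega>) $ i \<ge> F t \<omega> (\<eta> t \<omega>) $ i) \<and>
           ((\<lambda>\<omega>. F t \<omega> (\<eta> t \<omega>)) \<notin> N0set M H A F t \<longrightarrow>
              measure M {\<omega> \<in> space M. \<exists>k. G t \<omega> (\<eta> t \<omega>) $ k > F t \<omega> (\<eta> t \<omega>) $ k} > 0))) \<and>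
     NAw M H T A G)"

end

theory Submission imports Defs begin

lemma meas_sigma:
  assumes "G \<subseteq> sets M" "Y \<in> borel_measurable (sigma (space M) G)"
  shows "Y \<in> borel_measurable M"
proof -
  have G: "G \<subseteq> Pow (space M)" using assms(1) sets.sets_into_space by blast
  have "sigma (space M) G \<rightarrow>\<^sub>M (borel::'b measure) \<subseteq> M \<rightarrow>\<^sub>M borel"
    apply (rule measurable_mono)
    using G assms(1) by (auto simp: sets.sigma_sets_subset)
  then show ?thesis using assms(2) by blast
qed

lemma sigma_sets_M: "borel_measurable (sigma (space M) (sets M)) = borel_measurable M"
  by (rule measurable_cong_sets) (simp_all add: sets.sigma_sets_eq)

lemma comp_meas:
  assumes "(\<lambda>(\<omega>, a). F \<omega> a) \<in> borel_measurable (M \<Otimes>\<^sub>M borel)" "Y \<in> borel_measurable M"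
  shows "(\<lambda>\<omega>. F \<omega> (Y \<omega>)) \<in> borel_measurable M"
  using measurable_compose[OF measurable_Pair[OF measurable_ident_sets[OF refl] assms(2)] assms(1)]
  by simp

lemma closed_Rplus: "closed (Rplus :: (real^'d) set)"
  unfolding Rplus_def by (intro closed_Collect_all closed_Collect_le continuous_intros)

lemma L0_Rplus_I:
  fixes f :: "'a \<Rightarrow> real^'d"
  assumes "f \<in> borel_measurable M" "AE \<omega> in M. f \<omega> \<in> Rplus"
  shows "f \<in> L0 M (sets M) Rplus"
proof -
  have s: "{\<omega>\<in>space M. f \<omega> \<in> Rplus} \<in> sets M"
    using measurable_sets[OF assms(1) borel_closed[OF closed_Rplus]] 
    by (simp add: vimage_def Int_def conj_commute)
  have m: "(\<lambda>\<omega>. if f \<omega> \<in> Rplus then f \<omega> else 0) \<in> borel_measurable M"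
    by (rule measurable_If[OF assms(1) _ s]) simp
  have z: "(0::real^'d) \<in> Rplus" by (simp add: Rplus_def)
  show ?thesis unfolding L0_def sigma_sets_M
    apply (rule CollectI, rule exI[of _ "\<lambda>\<omega>. if f \<omega> \<in> Rplus then f \<omega> else 0"])
    using m z assms(2) by auto
qed

lemma L0_AE: assumes "X \<in> L0 M G E" "AE \<omega> in M. X \<omega> = X' \<omega>" shows "X' \<in> L0 M G E"
proof -
  obtain Y where Y: "Y \<in> borel_measurable (sigma (space M) G)" "\<forall>\<omega>\<in>space M. Y \<omega> \<in> E" "AE \<omega> in M. X \<omega> = Y \<omega>"
    using assms(1) unfolding L0_def by blast
  have "AE \<omega> in M. X' \<omega> = Y \<omega>" using assms(2) Y(3) by (auto elim: eventually_elim2)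
  then show ?thesis using Y unfolding L0_def by blast
qed

lemma L0_Rplus_D: "X \<in> L0 M G Rplus \<Longrightarrow> AE \<omega> in M. X \<omega> \<in> Rplus"
  unfolding L0_def by (auto elim!: AE_mp)

lemma L0_I: "Y \<in> borel_measurable (sigma (space M) G) \<Longrightarrow> (\<forall>\<omega>\<in>space M. Y \<omega> \<in> E) \<Longrightarrow> Y \<in> L0 M G E"
  unfolding L0_def by auto

lemma Nset_AE: assumes "X \<in> Nset M H A F t" "AE \<omega> in M. X \<omega> = X' \<omega>" shows "X' \<in> Nset M H A F t"
proof -
  obtain e where e: "e \<in> L0 M (H t) A" "AE \<omega> in M. X \<omega> = F t \<omega> (e \<omega>)"
    using assms(1) unfolding Nset_def by blast
  have "AE \<omega> in M. X' \<omega> = F t \<omega> (e \<omega>)" using assms(2) e(2) by (auto elim: eventually_elim2)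
  then show ?thesis using e unfolding Nset_def by blast
qed

lemma N0set_AE: assumes "X \<in> N0set M H A F t" "AE \<omega> in M. X \<omega> = X' \<omega>" shows "X' \<in> N0set M H A F t"
proof -
  have "AE \<omega> in M. - X \<omega> = - X' \<omega>" using \<open>AE \<omega> in M. X \<omega> = X' \<omega>\<close> by (auto elim: AE_mp)
  then show ?thesis using assms unfolding N0set_def by (auto intro: Nset_AE)
qed

lemma setting_D:
  assumes "setting M H T A"
  shows "prob_space M" "\<And>t. t \<le> T \<Longrightarrow> H t \<subseteq> sets M" "convex_cone A"
    "\<And>t. t \<le> T \<Longrightarrow> sigma_algebra (space M) (H t)"
proof -
  show "prob_space M" using assms unfolding setting_def by auto
  show "\<And>t. t \<le> T \<Longrightarrow> H t \<subseteq> sets M" using assms unfolding setting_def by (meson order_refl subset_trans)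
  show "convex_cone A" using assms unfolding setting_def by (meson Convex.cone_def conic_def convex_cone_def)
  show "\<And>t. t \<le> T \<Longrightarrow> sigma_algebra (space M) (H t)" using assms unfolding setting_def by auto
qed


lemma versions:
  assumes "inN M H T A F \<xi>"
  obtains Y where "\<forall>s\<le>T. Y s \<in> borel_measurable (sigma (space M) (H s))"
    "\<forall>s\<le>T. \<forall>\<omega>\<in>space M. Y s \<omega> \<in> A" "\<forall>s\<le>T. AE \<omega> in M. \<xi> s \<omega> = F s \<omega> (Y s \<omega>)"
proof -
  have "\<forall>s. s \<le> T \<longrightarrow> (\<exists>y. y \<in> borel_measurable (sigma (space M) (H s)) \<and> (\<forall>\<omega>\<in>space M. y \<omega> \<in> A)
      \<and> (AE \<omega> in M. \<xi> s \<omega> = F s \<omega> (y \<omega>)))"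
  proof (intro allI impI)
    fix s assume "s \<le> T"
    then obtain e where e: "e \<in> L0 M (H s) A" "AE \<omega> in M. \<xi> s \<omega> = F s \<omega> (e \<omega>)"
      using assms unfolding inN_def Nset_def by blast
    obtain y where y: "y \<in> borel_measurable (sigma (space M) (H s))" "\<forall>\<omega>\<in>space M. y \<omega> \<in> A" "AE \<omega> in M. e \<omega> = y \<omega>"
      using e(1) unfolding L0_def by blast
    have "AE \<omega> in M. \<xi> s \<omega> = F s \<omega> (y \<omega>)" using e(2) y(3) by (auto elim: eventually_elim2)
    then show "\<exists>y. y \<in> borel_measurable (sigma (space M) (H s)) \<and> (\<forall>\<omega>\<in>space M. y \<omega> \<in> A)
      \<and> (AE \<omega> in M. \<xi> s \<omega> = F s \<omega> (y \<omega>))" using y by blast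
  qed
  then obtain Y where "\<forall>s. s \<le> T \<longrightarrow> Y s \<in> borel_measurable (sigma (space M) (H s)) \<and> (\<forall>\<omega>\<in>space M. Y s \<omega> \<in> A)
      \<and> (AE \<omega> in M. \<xi> s \<omega> = F s \<omega> (Y s \<omega>))" by metis
  then show ?thesis using that by blast
qed

lemma Fmeas:
  assumes "setting M H T A" "boldF M T A F" "s \<le> T" "Y \<in> borel_measurable (sigma (space M) (H s))"
  shows "(\<lambda>\<omega>. F s \<omega> (Y \<omega>)) \<in> borel_measurable M"
  using comp_meas[OF _ meas_sigma[OF setting_D(2)[OF assms(1,3)] assms(4)]] assms(2,3)
  unfolding boldF_def by blast

lemma inN_I:
  assumes "\<forall>s\<le>T. Y s \<in> borel_measurable (sigma (space M) (H s))" "\<forall>s\<le>T. \<forall>\<omega>\<in>space M. Y s \<omega> \<in> A"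
  shows "inN M H T A F (\<lambda>s \<omega>. F s \<omega> (Y s \<omega>))"
  unfolding inN_def Nset_def using assms by (auto intro!: L0_I)

lemma superadd:
  assumes "classF A f" "a \<in> A" "b \<in> A"
  shows "f (a + b) - f a - f b \<in> Rplus"
proof -
  from assms(1) have "\<forall>l::real. \<forall>b::real. \<forall>a\<in>A. \<forall>a'\<in>A. l \<ge> 0 \<longrightarrow> b \<ge> 0 \<longrightarrow>
        (\<forall>i. 0 \<le> (f (l *\<^sub>R a + b *\<^sub>R a') - (l *\<^sub>R f a + b *\<^sub>R f a')) $ i)"
    unfolding classF_def by blast
  then have "\<forall>i. 0 \<le> (f (1 *\<^sub>R a + 1 *\<^sub>R b) - (1 *\<^sub>R f a + 1 *\<^sub>R f b)) $ i"
    apply (drule_tac x=1 in spec, drule_tac x=1 in spec)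
    apply (drule bspec[OF _ assms(2)], drule bspec[OF _ assms(3)])
    by simp
  then show ?thesis unfolding Rplus_def by (simp add: diff_diff_eq)
qed

lemma sumA:
  assumes "setting M H T A" "boldF M T A F" "inN M H T A F \<xi>" "inN M H T A F \<xi>'" "t \<le> T"
  shows "(\<lambda>\<omega>. V t \<xi> \<omega> + V t \<xi>' \<omega>) \<in> Aset M H T A F t"
proof -
  obtain Y where Y: "\<forall>s\<le>T. Y s \<in> borel_measurable (sigma (space M) (H s))"
    "\<forall>s\<le>T. \<forall>\<omega>\<in>space M. Y s \<omega> \<in> A" "\<forall>s\<le>T. AE \<omega> in M. \<xi> s \<omega> = F s \<omega> (Y s \<omega>)"
    using versions[OF assms(3)] by blast
  obtain Y' where Y': "\<forall>s\<le>T. Y' s \<in> borel_measurable (sigma (space M) (H s))"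
    "\<forall>s\<le>T. \<forall>\<omega>\<in>space M. Y' s \<omega> \<in> A" "\<forall>s\<le>T. AE \<omega> in M. \<xi>' s \<omega> = F s \<omega> (Y' s \<omega>)"
    using versions[OF assms(4)] by blast
  have cc: "convex_cone A" using setting_D(3)[OF assms(1)] .
  define Z where "Z = (\<lambda>s \<omega>. Y s \<omega> + Y' s \<omega>)"
  have Zm: "\<forall>s\<le>T. Z s \<in> borel_measurable (sigma (space M) (H s))"
    using Y(1) Y'(1) unfolding Z_def by (auto intro!: borel_measurable_add)
  have ZA: "\<forall>s\<le>T. \<forall>\<omega>\<in>space M. Z s \<omega> \<in> A"
    using Y(2) Y'(2) convex_cone_add[OF cc] unfolding Z_def by auto
  define \<psi> where "\<psi> s \<omega> = F s \<omega> (Z s \<omega>)" for s \<omega>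
  have inpsi: "inN M H T A F \<psi>" unfolding \<psi>_def by (rule inN_I[OF Zm ZA])
  define r where "r \<omega> = (\<Sum>s\<le>t. \<psi> s \<omega> - F s \<omega> (Y s \<omega>) - F s \<omega> (Y' s \<omega>))" for \<omega>
  have rm: "r \<in> borel_measurable M"
    unfolding r_def \<psi>_def
    apply (intro borel_measurable_sum borel_measurable_diff)
    using Fmeas[OF assms(1,2)] Y(1) Y'(1) Zm assms(5) by auto
  have cF: "AE \<omega> in M. \<forall>s\<in>{..T}. classF A (F s \<omega>)"
    by (rule AE_finite_allI) (use assms(2) in \<open>auto simp: boldF_def\<close>)
  have "AE \<omega> in M. r \<omega> \<in> Rplus"
    using cF AE_space
  proof eventually_elim
    case (elim \<omega>)
    have "\<forall>s\<in>{..t}. \<psi> s \<omega> - F s \<omega> (Y s \<omega>) - F s \<omega> (Y' s \<omega>) \<in> Rplus"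
    proof
      fix s assume "s \<in> {..t}"
      then have sT: "s \<le> T" using assms(5) by auto
      have "classF A (F s \<omega>)" using elim sT by auto
      moreover have "Y s \<omega> \<in> A" "Y' s \<omega> \<in> A" using Y(2) Y'(2) sT elim by auto
      ultimately show "\<psi> s \<omega> - F s \<omega> (Y s \<omega>) - F s \<omega> (Y' s \<omega>) \<in> Rplus"
        unfolding \<psi>_def Z_def by (simp add: superadd)
    qed
    then show ?case unfolding r_def Rplus_def by (auto intro!: sum_nonneg)
  qed
  then have rL: "r \<in> L0 M (sets M) Rplus" using L0_Rplus_I rm by blast
  have e1: "AE \<omega> in M. \<forall>s\<in>{..T}. \<xi> s \<omega> = F s \<omega> (Y s \<omega>)"
    by (rule AE_finite_allI) (use Y(3) in auto)
  have e2: "AE \<omega> in M. \<forall>s\<in>{..T}. \<xi>' s \<omega> = F s \<omega> (Y' s \<omega>)"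
    by (rule AE_finite_allI) (use Y'(3) in auto)
  have "AE \<omega> in M. V t \<xi> \<omega> + V t \<xi>' \<omega> = V t \<psi> \<omega> - r \<omega>"
    using e1 e2
  proof eventually_elim
    case (elim \<omega>)
    have a: "V t \<xi> \<omega> = (\<Sum>s\<le>t. F s \<omega> (Y s \<omega>))" unfolding V_def
      using elim assms(5) by (intro sum.cong) auto
    have b: "V t \<xi>' \<omega> = (\<Sum>s\<le>t. F s \<omega> (Y' s \<omega>))" unfolding V_def
      using elim assms(5) by (intro sum.cong) auto
    show ?case unfolding r_def by (simp add: a b V_def[of t \<psi>] sum_subtractf)
  qed
  then show ?thesis unfolding Aset_def using inpsi rL by blast
qed


lemma vnth_meas:
  fixes f :: "'a \<Rightarrow> real^'d"
  assumes "f \<in> borel_measurable M"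
  shows "(\<lambda>\<omega>. f \<omega> $ k) \<in> borel_measurable M"
  by (rule borel_measurable_continuous_on[OF _ assms]) (intro continuous_intros)

lemma keyreal:
  fixes a b c d :: "nat \<Rightarrow> real"
  assumes "finite I" "\<forall>s\<in>I. b s \<le> a s" "\<forall>s\<in>I. d s \<le> c s" "sum a I + sum c I = 0" "0 \<le> sum b I + sum d I"
  shows "(\<forall>s\<in>I. a s = b s) \<and> sum b I + sum d I = 0"
proof -
  have p1: "0 \<le> (\<Sum>s\<in>I. a s - b s)" using assms(2) by (auto intro: sum_nonneg)
  have p2: "0 \<le> (\<Sum>s\<in>I. c s - d s)" using assms(3) by (auto intro: sum_nonneg)
  have e: "(\<Sum>s\<in>I. a s - b s) + (\<Sum>s\<in>I. c s - d s) = - (sum b I + sum d I)"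
    using assms(4) by (simp add: sum_subtractf)
  then have z: "(\<Sum>s\<in>I. a s - b s) = 0" using p1 p2 assms(5) by linarith
  have "\<forall>s\<in>I. a s - b s = 0"
    using iffD1[OF sum_nonneg_eq_0_iff[OF assms(1)] z] assms(2) by auto
  then show ?thesis using e z p2 assms(5) by auto
qed

lemma case_i:
  assumes set: "setting M H T A" and bF: "boldF M T A F" and nar: "NAr M H T A F"
  shows "KP M H T A F"
proof -
  obtain G where bG: "boldF M T A G" and cond: "\<And>\<eta>. (\<forall>t\<le>T. \<eta> t \<in> L0 M (H t) A) \<Longrightarrow>
        (\<forall>t\<le>T.
           (\<forall>i. AE \<omega> in M. G t \<omega> (\<eta> t \<omega>) $ i \<ge> F t \<omega> (\<eta> t \<omega>) $ i) \<and>
           ((\<lambda>\<omega>. F t \<omega> (\<eta> t \<omega>)) \<notin> N0set M H A F t \<longrightarrow>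
              measure M {\<omega> \<in> space M. \<exists>k. G t \<omega> (\<eta> t \<omega>) $ k > F t \<omega> (\<eta> t \<omega>) $ k} > 0))"
    and naw: "NAw M H T A G"
    using nar unfolding NAr_def by blast
  show ?thesis unfolding KP_def
  proof (intro allI impI, elim conjE)
    fix \<xi> \<xi>' assume iN: "inN M H T A F \<xi>" and iN': "inN M H T A F \<xi>'"
      and SL: "(\<lambda>\<omega>. V T \<xi> \<omega> + V T \<xi>' \<omega>) \<in> L0 M (sets M) Rplus"
    obtain Y where Y: "\<forall>s\<le>T. Y s \<in> borel_measurable (sigma (space M) (H s))"
      "\<forall>s\<le>T. \<forall>\<omega>\<in>space M. Y s \<omega> \<in> A" "\<forall>s\<le>T. AE \<omega> in M. \<xi> s \<omega> = F s \<omega> (Y s \<omega>)"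
      using versions[OF iN] by blast
    obtain Y' where Y': "\<forall>s\<le>T. Y' s \<in> borel_measurable (sigma (space M) (H s))"
      "\<forall>s\<le>T. \<forall>\<omega>\<in>space M. Y' s \<omega> \<in> A" "\<forall>s\<le>T. AE \<omega> in M. \<xi>' s \<omega> = F s \<omega> (Y' s \<omega>)"
      using versions[OF iN'] by blast
    have LY: "\<forall>t\<le>T. Y t \<in> L0 M (H t) A" using Y by (auto intro: L0_I)
    have LY': "\<forall>t\<le>T. Y' t \<in> L0 M (H t) A" using Y' by (auto intro: L0_I)
    note cY = cond[OF LY] and cY' = cond[OF LY']
    define g where "g = (\<lambda>s \<omega>. G s \<omega> (Y s \<omega>))"
    define g' where "g' = (\<lambda>s \<omega>. G s \<omega> (Y' s \<omega>))"
    define f where "f = (\<lambda>s \<omega>. F s \<omega> (Y s \<omega>))"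
    define f' where "f' = (\<lambda>s \<omega>. F s \<omega> (Y' s \<omega>))"
    define S where "S = (\<lambda>\<omega>. V T \<xi> \<omega> + V T \<xi>' \<omega>)"
    define X where "X = (\<lambda>\<omega>. V T g \<omega> + V T g' \<omega>)"
    have gm: "\<forall>s\<le>T. g s \<in> borel_measurable M" "\<forall>s\<le>T. g' s \<in> borel_measurable M"
      "\<forall>s\<le>T. f s \<in> borel_measurable M" "\<forall>s\<le>T. f' s \<in> borel_measurable M"
      unfolding g_def g'_def f_def f'_def using Fmeas[OF set bG] Fmeas[OF set bF] Y(1) Y'(1) by auto
    have XA: "X \<in> Aset M H T A G T" unfolding X_def g_def g'_def
      by (rule sumA[OF set bG inN_I inN_I]) (use Y Y' in auto)
    have Xm: "X \<in> borel_measurable M" unfolding X_def V_def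
      using gm by (auto intro!: borel_measurable_add borel_measurable_sum)
    have e1: "AE \<omega> in M. \<forall>s\<in>{..T}. \<xi> s \<omega> = f s \<omega>"
      by (rule AE_finite_allI) (use Y(3) in \<open>auto simp: f_def\<close>)
    have e2: "AE \<omega> in M. \<forall>s\<in>{..T}. \<xi>' s \<omega> = f' s \<omega>"
      by (rule AE_finite_allI) (use Y'(3) in \<open>auto simp: f'_def\<close>)
    have ge1: "AE \<omega> in M. \<forall>s\<in>{..T}. \<forall>i. f s \<omega> $ i \<le> g s \<omega> $ i"
      by (rule AE_finite_allI) (use cY in \<open>auto simp: f_def g_def AE_all_countable\<close>)
    have ge2: "AE \<omega> in M. \<forall>s\<in>{..T}. \<forall>i. f' s \<omega> $ i \<le> g' s \<omega> $ i"
      by (rule AE_finite_allI) (use cY' in \<open>auto simp: f'_def g'_def AE_all_countable\<close>)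
    have Sp: "AE \<omega> in M. S \<omega> \<in> Rplus" using L0_Rplus_D[OF SL] unfolding S_def .
    have comp: "AE \<omega> in M. \<forall>i. S \<omega> $ i = (\<Sum>s\<le>T. f s \<omega> $ i) + (\<Sum>s\<le>T. f' s \<omega> $ i)
        \<and> X \<omega> $ i = (\<Sum>s\<le>T. g s \<omega> $ i) + (\<Sum>s\<le>T. g' s \<omega> $ i)"
      using e1 e2
    proof eventually_elim
      case (elim \<omega>)
      have a: "V T \<xi> \<omega> = (\<Sum>s\<le>T. f s \<omega>)" unfolding V_def using elim by (intro sum.cong) auto
      have b: "V T \<xi>' \<omega> = (\<Sum>s\<le>T. f' s \<omega>)" unfolding V_def using elim by (intro sum.cong) auto
      show ?case unfolding S_def X_def a b by (simp add: V_def sum_component)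
    qed
    have XR: "AE \<omega> in M. X \<omega> \<in> Rplus"
      using comp ge1 ge2 Sp
    proof eventually_elim
      case (elim \<omega>)
      show ?case unfolding Rplus_def
      proof (intro CollectI allI)
        fix i
        have "(\<Sum>s\<le>T. f s \<omega> $ i) \<le> (\<Sum>s\<le>T. g s \<omega> $ i)" using elim by (intro sum_mono) auto
        moreover have "(\<Sum>s\<le>T. f' s \<omega> $ i) \<le> (\<Sum>s\<le>T. g' s \<omega> $ i)" using elim by (intro sum_mono) auto
        moreover have "0 \<le> S \<omega> $ i" using elim by (simp add: Rplus_def)
        ultimately show "0 \<le> X \<omega> $ i" using elim by simp
      qed
    qed
    have X0: "AE \<omega> in M. X \<omega> = 0"
      using naw XA L0_Rplus_I[OF Xm XR] unfolding NAw_def by blast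
    have key: "AE \<omega> in M. (\<forall>s\<in>{..T}. \<forall>i. g s \<omega> $ i = f s \<omega> $ i) \<and> S \<omega> = 0"
      using comp ge1 ge2 Sp X0
    proof eventually_elim
      case (elim \<omega>)
      have k: "\<And>i. (\<forall>s\<in>{..T}. g s \<omega> $ i = f s \<omega> $ i) \<and>
          (\<Sum>s\<le>T. f s \<omega> $ i) + (\<Sum>s\<le>T. f' s \<omega> $ i) = 0"
      proof -
        fix i
        show "(\<forall>s\<in>{..T}. g s \<omega> $ i = f s \<omega> $ i) \<and>
          (\<Sum>s\<le>T. f s \<omega> $ i) + (\<Sum>s\<le>T. f' s \<omega> $ i) = 0"
        proof (rule keyreal)
          show "(\<Sum>s\<le>T. g s \<omega> $ i) + (\<Sum>s\<le>T. g' s \<omega> $ i) = 0"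
            using elim by (metis zero_index)
          show "0 \<le> (\<Sum>s\<le>T. f s \<omega> $ i) + (\<Sum>s\<le>T. f' s \<omega> $ i)"
            using elim by (simp add: Rplus_def)
        qed (use elim in auto)
      qed
      show ?case
      proof
        show "\<forall>s\<in>{..T}. \<forall>i. g s \<omega> $ i = f s \<omega> $ i" using k by blast
        show "S \<omega> = 0" using k elim by (simp add: vec_eq_iff)
      qed
    qed
    have V0: "AE \<omega> in M. V T \<xi> \<omega> + V T \<xi>' \<omega> = 0" using key unfolding S_def by (auto elim: AE_mp)
    have "inN0 M H T A F \<xi>" unfolding inN0_def
    proof (intro allI impI)
      fix t assume tT: "t \<le> T"
      show "\<xi> t \<in> N0set M H A F t"
      proof (rule ccontr)
        assume nx: "\<xi> t \<notin> N0set M H A F t"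
        have "f t \<notin> N0set M H A F t"
        proof
          assume "f t \<in> N0set M H A F t"
          moreover have "AE \<omega> in M. f t \<omega> = \<xi> t \<omega>" using Y(3) tT unfolding f_def by (auto elim: AE_mp)
          ultimately show False using nx N0set_AE by blast
        qed
        then have pos: "measure M {\<omega> \<in> space M. \<exists>k. g t \<omega> $ k > f t \<omega> $ k} > 0"
          using cY tT unfolding f_def g_def by blast
        have Nm: "{\<omega> \<in> space M. \<exists>k. g t \<omega> $ k > f t \<omega> $ k} \<in> sets M"
        proof -
          have "{\<omega> \<in> space M. \<exists>k. g t \<omega> $ k > f t \<omega> $ k} = (\<Union>k. {\<omega> \<in> space M. f t \<omega> $ k < g t \<omega> $ k})"
            by auto
          also have "\<dots> \<in> sets M"
          proof -
            have fg: "f t \<in> borel_measurable M" "g t \<in> borel_measurable M" using gm tT by auto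
            have "\<And>k. {\<omega> \<in> space M. f t \<omega> $ k < g t \<omega> $ k} \<in> sets M"
              by (intro borel_measurable_less vnth_meas fg)
            then show ?thesis by (intro sets.countable_UN) auto
          qed
          finally show ?thesis .
        qed
        have "AE \<omega> in M. \<not> (\<exists>k. g t \<omega> $ k > f t \<omega> $ k)" using key tT by (auto elim: AE_mp)
        then have "emeasure M {\<omega> \<in> space M. \<exists>k. g t \<omega> $ k > f t \<omega> $ k} = 0"
          using AE_iff_measurable[OF Nm] by auto
        then show False using pos by (simp add: measure_def)
      qed
    qed
    then show "inN0 M H T A F \<xi> \<and> (AE \<omega> in M. V T \<xi> \<omega> + V T \<xi>' \<omega> = 0)" using V0 by blast
  qed
qed


lemma classF_zero: "classF A f \<Longrightarrow> f 0 = 0"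
  unfolding classF_def by (metis order_refl scale_zero_left)

lemma zeroN:
  assumes set: "setting M H T A" and bF: "boldF M T A F" and tT: "t \<le> T"
  shows "(\<lambda>\<omega>. 0) \<in> Nset M H A F t"
proof -
  have "(\<lambda>\<omega>. 0) \<in> L0 M (H t) A"
    using convex_cone_contains_0[OF setting_D(3)[OF set]] by (intro L0_I) auto
  moreover have "AE \<omega> in M. classF A (F t \<omega>)" using bF tT unfolding boldF_def by blast
  then have "AE \<omega> in M. 0 = F t \<omega> ((\<lambda>\<omega>. 0) \<omega>)"
    by eventually_elim (simp add: classF_zero)
  ultimately show ?thesis unfolding Nset_def
    by (intro CollectI bexI[where x="\<lambda>\<omega>. 0"]) simp_all
qed

lemma V_upd: "V t (\<xi>(t := (\<lambda>\<omega>. 0))) \<omega> = V t \<xi> \<omega> - \<xi> t \<omega>"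
proof -
  have "V t \<xi> \<omega> = \<xi> t \<omega> + (\<Sum>s\<in>{..t} - {t}. \<xi> s \<omega>)"
    unfolding V_def by (rule sum.remove) auto
  moreover have "V t (\<xi>(t := (\<lambda>\<omega>. 0))) \<omega> = 0 + (\<Sum>s\<in>{..t} - {t}. \<xi> s \<omega>)"
    unfolding V_def by (subst sum.remove[of _ t]) auto
  ultimately show ?thesis by simp
qed

lemma V_single: "V t (\<lambda>s \<omega>. if s = t then \<xi> \<omega> else 0) \<omega> = \<xi> \<omega>"
  unfolding V_def by simp

lemma V_Suc: "V (Suc t) \<xi> \<omega> = V t \<xi> \<omega> + \<xi> (Suc t) \<omega>"
  unfolding V_def by simp

lemma inN_meas:
  assumes set: "setting M H T A" and bF: "boldF M T A F" and iN: "inN M H T A F \<xi>"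
  obtains f where "\<forall>s\<le>T. f s \<in> borel_measurable M" "\<forall>s\<le>T. AE \<omega> in M. \<xi> s \<omega> = f s \<omega>"
proof -
  obtain Y where Y: "\<forall>s\<le>T. Y s \<in> borel_measurable (sigma (space M) (H s))"
    "\<forall>s\<le>T. \<forall>\<omega>\<in>space M. Y s \<omega> \<in> A" "\<forall>s\<le>T. AE \<omega> in M. \<xi> s \<omega> = F s \<omega> (Y s \<omega>)"
    using versions[OF iN] by blast
  show ?thesis
    by (rule that[of "\<lambda>s \<omega>. F s \<omega> (Y s \<omega>)"]) (use Y Fmeas[OF set bF] in auto)
qed

lemma L0_from_AE:
  fixes X :: "'a \<Rightarrow> real^'d"
  assumes "f \<in> borel_measurable M" "AE \<omega> in M. X \<omega> = f \<omega>" "AE \<omega> in M. X \<omega> \<in> Rplus"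
  shows "X \<in> L0 M (sets M) Rplus"
proof -
  have "AE \<omega> in M. f \<omega> \<in> Rplus" using assms(2,3) by (auto elim: eventually_elim2)
  then have "f \<in> L0 M (sets M) Rplus" using L0_Rplus_I assms(1) by blast
  moreover have "AE \<omega> in M. f \<omega> = X \<omega>" using assms(2) by (auto elim: AE_mp)
  ultimately show ?thesis using L0_AE by blast
qed

lemma step_ii:
  assumes set: "setting M H T A" and bF: "boldF M T A F" and nas: "NAs M H T A F" and ef: "EF M H T A F"
    and tT: "t \<le> T" and iN: "inN M H T A F \<xi>" and iN': "inN M H T A F \<xi>'"
    and Sp: "AE \<omega> in M. V t \<xi> \<omega> + V t \<xi>' \<omega> \<in> Rplus"
  shows "AE \<omega> in M. \<xi> t \<omega> = 0"
proof -
  obtain f where f: "\<forall>s\<le>T. f s \<in> borel_measurable M" "\<forall>s\<le>T. AE \<omega> in M. \<xi> s \<omega> = f s \<omega>"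
    using inN_meas[OF set bF iN] by blast
  obtain f' where f': "\<forall>s\<le>T. f' s \<in> borel_measurable M" "\<forall>s\<le>T. AE \<omega> in M. \<xi>' s \<omega> = f' s \<omega>"
    using inN_meas[OF set bF iN'] by blast
  have z: "\<And>s. s \<le> T \<Longrightarrow> (\<lambda>\<omega>. 0) \<in> Nset M H A F s" using zeroN[OF set bF] by blast
  define S where "S = (\<lambda>\<omega>. V t \<xi> \<omega> + V t \<xi>' \<omega>)"
  have SL: "S \<in> L0 M (sets M) Rplus"
  proof (rule L0_from_AE)
    show "(\<lambda>\<omega>. (\<Sum>s\<le>t. f s \<omega>) + (\<Sum>s\<le>t. f' s \<omega>)) \<in> borel_measurable M"
      using f(1) f'(1) tT by (auto intro!: borel_measurable_add borel_measurable_sum)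
    have e1: "AE \<omega> in M. \<forall>s\<in>{..t}. \<xi> s \<omega> = f s \<omega>"
      by (rule AE_finite_allI) (use f(2) tT in auto)
    have e2: "AE \<omega> in M. \<forall>s\<in>{..t}. \<xi>' s \<omega> = f' s \<omega>"
      by (rule AE_finite_allI) (use f'(2) tT in auto)
    show "AE \<omega> in M. S \<omega> = (\<Sum>s\<le>t. f s \<omega>) + (\<Sum>s\<le>t. f' s \<omega>)"
      using e1 e2 by eventually_elim (simp add: S_def V_def)
    show "AE \<omega> in M. S \<omega> \<in> Rplus" using Sp unfolding S_def .
  qed
  define \<xi>h where "\<xi>h = \<xi>(t := (\<lambda>\<omega>. 0))"
  have iNh: "inN M H T A F \<xi>h" using iN z unfolding inN_def \<xi>h_def by auto
  define X where "X = (\<lambda>\<omega>. V t \<xi>h \<omega> + V t \<xi>' \<omega>)"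
  have XA: "X \<in> Aset M H T A F t" unfolding X_def by (rule sumA[OF set bF iNh iN' tT])
  have Xeq: "\<And>\<omega>. X \<omega> = - \<xi> t \<omega> + S \<omega>" unfolding X_def S_def \<xi>h_def V_upd by simp
  have "X \<in> N0set M H A F t"
    using nas tT XA iN SL Xeq unfolding NAs_def inN_def by blast
  then have X0: "AE \<omega> in M. X \<omega> = 0" using ef tT unfolding EF_def by blast
  have xR: "AE \<omega> in M. \<xi> t \<omega> \<in> Rplus"
    using X0 L0_Rplus_D[OF SL]
  proof eventually_elim
    case (elim \<omega>)
    then have "\<xi> t \<omega> = S \<omega>" using Xeq[of \<omega>] by (simp add: algebra_simps)
    then show ?case using elim by simp
  qed
  have xL: "\<xi> t \<in> L0 M (sets M) Rplus"
    by (rule L0_from_AE[OF _ _ xR]) (use f tT in auto)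
  define \<xi>s where "\<xi>s = (\<lambda>s \<omega>. if s = t then \<xi> t \<omega> else 0)"
  have iNs: "inN M H T A F \<xi>s" unfolding inN_def
  proof (intro allI impI)
    fix s assume "s \<le> T"
    then show "\<xi>s s \<in> Nset M H A F s"
      using iN z unfolding inN_def \<xi>s_def by (cases "s = t") auto
  qed
  have r0: "(\<lambda>\<omega>. 0 :: real^'b) \<in> L0 M (sets M) Rplus"
    by (rule L0_Rplus_I) (auto simp: Rplus_def)
  have "\<xi> t \<in> Aset M H T A F t" unfolding Aset_def
    using iNs r0 by (auto simp: \<xi>s_def V_single intro!: exI[of _ \<xi>s] exI[of _ "\<lambda>\<omega>. 0"])
  moreover have "\<exists>\<zeta> \<in> Nset M H A F t. \<exists>r \<in> L0 M (sets M) Rplus. AE \<omega> in M. \<xi> t \<omega> = - \<zeta> \<omega> + r \<omega>"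
  proof (rule bexI[OF _ z[OF tT]], rule bexI[OF _ xL])
    show "AE \<omega> in M. \<xi> t \<omega> = - 0 + \<xi> t \<omega>" by simp
  qed
  ultimately have "\<xi> t \<in> N0set M H A F t" using nas tT unfolding NAs_def by blast
  then show ?thesis using ef tT unfolding EF_def by blast
qed


lemma ind_ii:
  assumes set: "setting M H T A" and bF: "boldF M T A F" and nas: "NAs M H T A F" and ef: "EF M H T A F"
    and iN: "inN M H T A F \<xi>" and iN': "inN M H T A F \<xi>'"
  shows "t \<le> T \<Longrightarrow> (AE \<omega> in M. V t \<xi> \<omega> + V t \<xi>' \<omega> \<in> Rplus) \<Longrightarrow>
    \<forall>s\<le>t. (AE \<omega> in M. \<xi> s \<omega> = 0) \<and> (AE \<omega> in M. \<xi>' s \<omega> = 0)"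
proof (induction t)
  case 0
  have a: "AE \<omega> in M. \<xi> 0 \<omega> = 0" by (rule step_ii[OF set bF nas ef _ iN iN' 0(2)]) simp
  have "AE \<omega> in M. V 0 \<xi>' \<omega> + V 0 \<xi> \<omega> \<in> Rplus" using 0(2) by (simp add: add.commute)
  then have b: "AE \<omega> in M. \<xi>' 0 \<omega> = 0" by (rule step_ii[OF set bF nas ef _ iN' iN, rotated]) simp
  show ?case using a b by auto
next
  case (Suc t)
  have a: "AE \<omega> in M. \<xi> (Suc t) \<omega> = 0" by (rule step_ii[OF set bF nas ef Suc(2) iN iN' Suc(3)])
  have "AE \<omega> in M. V (Suc t) \<xi>' \<omega> + V (Suc t) \<xi> \<omega> \<in> Rplus" using Suc(3) by (simp add: add.commute)
  then have b: "AE \<omega> in M. \<xi>' (Suc t) \<omega> = 0" by (rule step_ii[OF set bF nas ef Suc(2) iN' iN])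
  have "AE \<omega> in M. V t \<xi> \<omega> + V t \<xi>' \<omega> \<in> Rplus"
    using a b Suc(3) by eventually_elim (simp add: V_Suc)
  then have IH: "\<forall>s\<le>t. (AE \<omega> in M. \<xi> s \<omega> = 0) \<and> (AE \<omega> in M. \<xi>' s \<omega> = 0)"
    using Suc by simp
  show ?case
  proof (intro allI impI)
    fix s assume "s \<le> Suc t"
    then have "s \<le> t \<or> s = Suc t" by auto
    then show "(AE \<omega> in M. \<xi> s \<omega> = 0) \<and> (AE \<omega> in M. \<xi>' s \<omega> = 0)" using IH a b by auto
  qed
qed

lemma case_ii:
  assumes set: "setting M H T A" and bF: "boldF M T A F" and nas: "NAs M H T A F" and ef: "EF M H T A F"
  shows "KP M H T A F"
  unfolding KP_def
proof (intro allI impI, elim conjE)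
  fix \<xi> \<xi>' assume iN: "inN M H T A F \<xi>" and iN': "inN M H T A F \<xi>'"
    and SL: "(\<lambda>\<omega>. V T \<xi> \<omega> + V T \<xi>' \<omega>) \<in> L0 M (sets M) Rplus"
  have all: "\<forall>s\<le>T. (AE \<omega> in M. \<xi> s \<omega> = 0) \<and> (AE \<omega> in M. \<xi>' s \<omega> = 0)"
    using ind_ii[OF set bF nas ef iN iN' order_refl L0_Rplus_D[OF SL]] .
  have z: "AE \<omega> in M. \<forall>s\<in>{..T}. \<xi> s \<omega> = 0 \<and> \<xi>' s \<omega> = 0"
    by (rule AE_finite_allI) (use all in auto)
  have V0: "AE \<omega> in M. V T \<xi> \<omega> + V T \<xi>' \<omega> = 0"
    using z by eventually_elim (simp add: V_def)
  have "inN0 M H T A F \<xi>" unfolding inN0_def N0set_def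
  proof (intro allI impI CollectI conjI)
    fix t assume tT: "t \<le> T"
    show "\<xi> t \<in> Nset M H A F t" using iN tT unfolding inN_def by blast
    have "AE \<omega> in M. 0 = - \<xi> t \<omega>" using all tT by (auto elim: AE_mp)
    then show "(\<lambda>\<omega>. - \<xi> t \<omega>) \<in> Nset M H A F t"
      by (rule Nset_AE[OF zeroN[OF set bF tT], where X'="\<lambda>\<omega>. - \<xi> t \<omega>"])
  qed
  then show "inN0 M H T A F \<xi> \<and> (AE \<omega> in M. V T \<xi> \<omega> + V T \<xi>' \<omega> = 0)" using V0 by blast
qed

theorem mainTheorem6:
  fixes M :: "'a measure" and H :: "nat \<Rightarrow> 'a set set" and T :: nat
    and A :: "('d::finite) mat set" and F :: "('a, 'd) rmap"
  assumes "setting M H T A"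
    and "boldF M T A F"
    and "NAr M H T A F \<or> (NAs M H T A F \<and> EF M H T A F)"
  shows "KP M H T A F"
  using assms case_i case_ii by blast

end
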